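(* Let $\mathbf{A}$ be a countable UL-chain and let $\mathscr{K}_1$ be the class of all finite $\mathbf{A}$-structures $\langle\mathbf{A},\mathbf{M}\rangle$ in the language with a single binary relation symbol $<$ such that for all $a,b\in M$: (1.1) $\|a<a\|^{\mathbf{A}}_{\mathbf{M}}<\bar 1$, and (1.2) $\|a<b\to b<a\|^{\mathbf{A}}_{\mathbf{M}}\ge\bar 1$. Then $\mathscr{K}_1^{\cong}$ is a Fraïssé class, i.e. a countable set of finitely generated $\mathbf{A}$-structures having the hereditary property, the joint embedding property and the amalgamation property.
   Context: A UL-algebra is $\mathbf{A}=\langle A,\wedge,\vee,\&,\to,\bar 0,\bar 1,\bot,\top\rangle$ where $\langle A,\wedge,\vee,\bot,\top\rangle$ is a bounded lattice, $\langle A,\&,\bar 1\rangle$ is a commutative monoid, $a\& b\le c$ iff $b\le a\to c$, and $((a\to b)\wedge\bar 1)\vee((b\to a)\wedge \bar 1)=\bar 1$; a UL-chain is one with linear order. An $\mathbf{A}$-structure for $\{<\}$ is a set $M$ with a function $<_{\mathbf{M}}:M^2\to A$, $\|a<b\|^{\mathbf{A}}_{\mathbf{M}}=<_{\mathbf{M}}(a,b)$, compound formulas evaluated by the operations of $\mathbf{A}$. Substructure: subset with restricted relation. Embedding: injective map preserving the values of $<$, identity on $\mathbf{A}$; isomorphism: surjective embedding. $\mathscr{K}^{\cong}$: one representative of each isomorphism type in $\mathscr{K}$. Hereditary property: closed under substructures (up to isomorphism). Joint embedding property: any two members embed into a common member. Amalgamation property: whenever $\mathbf{M}_0$ is a substructure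 of both $\mathbf{M}_1$ and $\mathbf{M}_2$, all in the class, there are a member $\mathbf{M}_3$ and embeddings $f_1:\mathbf{M}_1\to\mathbf{M}_3$, $f_2:\mathbf{M}_2\to\mathbf{M}_3$ agreeing on $M_0$. *)

theory Defs
  imports Main "HOL-Library.Countable_Set"
begin

record 'a ul_alg =
  ucarrier :: "'a set"
  umeet :: "'a \<Rightarrow> 'a \<Rightarrow> 'a"
  ujoin :: "'a \<Rightarrow> 'a \<Rightarrow> 'a"
  umult :: "'a \<Rightarrow> 'a \<Rightarrow> 'a"
  uimp  :: "'a \<Rightarrow> 'a \<Rightarrow> 'a"
  uzero :: 'a
  uone  :: 'a
  ubot  :: 'a
  utop  :: 'a

definition ul_le :: "'a ul_alg \<Rightarrow> 'a \<Rightarrow> 'a \<Rightarrow> bool" where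
  "ul_le A x y \<longleftrightarrow> umeet A x y = x"

definition ul_lt :: "'a ul_alg \<Rightarrow> 'a \<Rightarrow> 'a \<Rightarrow> bool" where
  "ul_lt A x y \<longleftrightarrow> ul_le A x y \<and> x \<noteq> y"

definition UL_algebra :: "'a ul_alg \<Rightarrow> bool" where
  "UL_algebra A \<longleftrightarrow>
     (let C = ucarrier A in
      uzero A \<in> C \<and> uone A \<in> C \<and> ubot A \<in> C \<and> utop A \<in> C \<and>
      (\<forall>x\<in>C. \<forall>y\<in>C. umeet A x y \<in> C \<and> ujoin A x y \<in> C \<and>
                      umult A x y \<in> C \<and> uimp A x y \<in> C) \<and>
      \<comment> \<open>bounded lattice\<close>
      (\<forall>x\<in>C. \<forall>y\<in>C. \<forall>z\<in>C.
          umeet A x (umeet A y z) = umeet A (umeet A x y) z \<and>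
          ujoin A x (ujoin A y z) = ujoin A (ujoin A x y) z) \<and>
      (\<forall>x\<in>C. \<forall>y\<in>C. umeet A x y = umeet A y x \<and> ujoin A x y = ujoin A y x \<and>
          umeet A x (ujoin A x y) = x \<and> ujoin A x (umeet A x y) = x) \<and>
      (\<forall>x\<in>C. ul_le A (ubot A) x \<and> ul_le A x (utop A)) \<and>
      \<comment> \<open>commutative monoid\<close>
      (\<forall>x\<in>C. \<forall>y\<in>C. \<forall>z\<in>C. umult A x (umult A y z) = umult A (umult A x y) z) \<and>
      (\<forall>x\<in>C. \<forall>y\<in>C. umult A x y = umult A y x) \<and>
      (\<forall>x\<in>C. umult A (uone A) x = x) \<and>
      \<comment> \<open>residuation\<close>
      (\<forall>a\<in>C. \<forall>b\<in>C. \<forall>c\<in>C. ul_le A (umult A a b) c \<longleftrightarrow> ul_le A b (uimp A a c)) \<and>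
      \<comment> \<open>prelinearity\<close>
      (\<forall>a\<in>C. \<forall>b\<in>C. ujoin A (umeet A (uimp A a b) (uone A)) (umeet A (uimp A b a) (uone A))
                       = uone A))"

definition UL_chain :: "'a ul_alg \<Rightarrow> bool" where
  "UL_chain A \<longleftrightarrow> UL_algebra A \<and>
     (\<forall>x\<in>ucarrier A. \<forall>y\<in>ucarrier A. ul_le A x y \<or> ul_le A y x)"

text \<open>An A-structure for the language with one binary relation symbol: a nonempty
  domain M together with the value function of the relation (only values on M matter).\<close>
type_synonym ('b, 'a) astr = "'b set \<times> ('b \<Rightarrow> 'b \<Rightarrow> 'a)"

definition A_structure :: "'a ul_alg \<Rightarrow> ('b, 'a) astr \<Rightarrow> bool" where
  "A_structure A S \<longleftrightarrow> fst S \<noteq> {} \<and>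
     (\<forall>a\<in>fst S. \<forall>b\<in>fst S. snd S a b \<in> ucarrier A)"

definition substructure :: "('b, 'a) astr \<Rightarrow> ('b, 'a) astr \<Rightarrow> bool" where
  "substructure N M \<longleftrightarrow> fst N \<subseteq> fst M \<and>
     (\<forall>a\<in>fst N. \<forall>b\<in>fst N. snd N a b = snd M a b)"

definition embedding :: "('b \<Rightarrow> 'c) \<Rightarrow> ('b, 'a) astr \<Rightarrow> ('c, 'a) astr \<Rightarrow> bool" where
  "embedding f M N \<longleftrightarrow> f ` fst M \<subseteq> fst N \<and> inj_on f (fst M) \<and>
     (\<forall>a\<in>fst M. \<forall>b\<in>fst M. snd N (f a) (f b) = snd M a b)"

definition isomorphic :: "('b, 'a) astr \<Rightarrow> ('c, 'a) astr \<Rightarrow> bool" where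
  "isomorphic M N \<longleftrightarrow> (\<exists>f. embedding f M N \<and> f ` fst M = fst N)"

text \<open>The class K_1 of finite A-structures satisfying (1.1) and (1.2); universes are
  taken to be subsets of nat (every finite structure is isomorphic to such a one).\<close>
definition K1 :: "'a ul_alg \<Rightarrow> (nat, 'a) astr set" where
  "K1 A = {S. A_structure A S \<and> finite (fst S) \<and>
     (\<forall>a\<in>fst S. \<forall>b\<in>fst S.
        ul_lt A (snd S a a) (uone A) \<and>
        ul_le A (uone A) (uimp A (snd S a b) (snd S b a)))}"

definition hereditary :: "(nat, 'a) astr set \<Rightarrow> bool" where
  "hereditary K \<longleftrightarrow> (\<forall>M\<in>K. \<forall>N. substructure N M \<and> fst N \<noteq> {} \<longrightarrow>
      (\<exists>N'\<in>K. isomorphic N N'))"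

definition joint_embedding :: "(nat, 'a) astr set \<Rightarrow> bool" where
  "joint_embedding K \<longleftrightarrow> (\<forall>M1\<in>K. \<forall>M2\<in>K. \<exists>M3\<in>K. \<exists>f g.
      embedding f M1 M3 \<and> embedding g M2 M3)"

definition amalgamation :: "(nat, 'a) astr set \<Rightarrow> bool" where
  "amalgamation K \<longleftrightarrow> (\<forall>M0\<in>K. \<forall>M1\<in>K. \<forall>M2\<in>K.
      substructure M0 M1 \<and> substructure M0 M2 \<longrightarrow>
      (\<exists>M3\<in>K. \<exists>f1 f2. embedding f1 M1 M3 \<and> embedding f2 M2 M3 \<and>
          (\<forall>x\<in>fst M0. f1 x = f2 x)))"

text \<open>K is (up to isomorphism) a Fraisse class: countably many isomorphism types,
  all finitely generated (= finite, the language being relational), with HP, JEP, AP.\<close>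
definition fraisse_class :: "(nat, 'a) astr set \<Rightarrow> bool" where
  "fraisse_class K \<longleftrightarrow>
     (\<exists>R. countable R \<and> R \<subseteq> K \<and> (\<forall>M\<in>K. \<exists>N\<in>R. isomorphic M N)) \<and>
     (\<forall>M\<in>K. finite (fst M)) \<and>
     hereditary K \<and> joint_embedding K \<and> amalgamation K"

end

theory Submission
  imports Defs
begin

lemma refl_le:
  assumes "UL_algebra A" "x \<in> ucarrier A"
  shows "ul_le A x x"
proof -
  have c: "umeet A x x \<in> ucarrier A" using assms unfolding UL_algebra_def Let_def by blast
  have "umeet A x (ujoin A x (umeet A x x)) = x" "ujoin A x (umeet A x x) = x"
    using assms c unfolding UL_algebra_def Let_def by blast+
  then show ?thesis unfolding ul_le_def by simp
qed

lemma one_imp: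
  assumes "UL_algebra A" "x \<in> ucarrier A"
  shows "ul_le A (uone A) (uimp A x x)"
proof -
  have o: "uone A \<in> ucarrier A" using assms unfolding UL_algebra_def Let_def by blast
  have r: "ul_le A (umult A x (uone A)) x \<longleftrightarrow> ul_le A (uone A) (uimp A x x)"
    using assms o unfolding UL_algebra_def Let_def by blast
  have "umult A x (uone A) = umult A (uone A) x" "umult A (uone A) x = x"
    using assms o unfolding UL_algebra_def Let_def by blast+
  then show ?thesis using r refl_le[OF assms] by simp
qed

lemma amalg_gen:
  assumes UA: "UL_algebra A" and M1: "(S1, r1) \<in> K1 A" and M2: "(S2, r2) \<in> K1 A"
    and Z1: "Z \<subseteq> S1" and Z2: "Z \<subseteq> S2"
    and Zr: "\<forall>a\<in>Z. \<forall>b\<in>Z. r1 a b = r2 a b"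
  shows "\<exists>M3\<in>K1 A. \<exists>f1 f2. embedding f1 (S1, r1) M3 \<and> embedding f2 (S2, r2) M3 \<and>
          (\<forall>x\<in>Z. f1 x = f2 x)"
proof -
  define f1 :: "nat \<Rightarrow> nat" where "f1 = (\<lambda>x. 2*x)"
  define f2 :: "nat \<Rightarrow> nat" where "f2 = (\<lambda>x. if x \<in> Z then 2*x else 2*x+1)"
  define D1 where "D1 = f1 ` S1"
  define D2 where "D2 = f2 ` S2"
  define r3 where "r3 = (\<lambda>u v. if u \<in> D1 \<and> v \<in> D1 then r1 (u div 2) (v div 2)
      else if u \<in> D2 \<and> v \<in> D2 then r2 (u div 2) (v div 2) else ubot A)"
  have d1: "\<And>x. f1 x div 2 = x" unfolding f1_def by simp
  have d2: "\<And>x. f2 x div 2 = x" unfolding f2_def by simp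
  have D1iff: "\<And>u. u \<in> D1 \<longleftrightarrow> u div 2 \<in> S1 \<and> u = f1 (u div 2)"
    unfolding D1_def using d1 by force
  have D2iff: "\<And>u. u \<in> D2 \<longleftrightarrow> u div 2 \<in> S2 \<and> u = f2 (u div 2)"
    unfolding D2_def using d2 by force
  have f2D1: "\<And>a. a \<in> S2 \<Longrightarrow> f2 a \<in> D1 \<Longrightarrow> a \<in> Z"
  proof (rule ccontr)
    fix a assume "a \<in> S2" "f2 a \<in> D1" "a \<notin> Z"
    then obtain x where "2*a+1 = 2*x" unfolding D1_def f1_def f2_def by auto
    then show False by presburger
  qed
  have bot: "ubot A \<in> ucarrier A" using UA unfolding UL_algebra_def Let_def by blast
  have K1S: "A_structure A (S, r) \<and> finite S \<and> (\<forall>a\<in>S. \<forall>b\<in>S.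
        ul_lt A (r a a) (uone A) \<and> ul_le A (uone A) (uimp A (r a b) (r b a)))"
    if "(S, r) \<in> K1 A" for S r using that unfolding K1_def by auto
  from K1S[OF M1] K1S[OF M2] have
    n1: "S1 \<noteq> {}" and c1: "\<forall>a\<in>S1. \<forall>b\<in>S1. r1 a b \<in> ucarrier A" and fin1: "finite S1"
    and p1: "\<forall>a\<in>S1. \<forall>b\<in>S1. ul_lt A (r1 a a) (uone A) \<and> ul_le A (uone A) (uimp A (r1 a b) (r1 b a))"
    and c2: "\<forall>a\<in>S2. \<forall>b\<in>S2. r2 a b \<in> ucarrier A" and fin2: "finite S2"
    and p2: "\<forall>a\<in>S2. \<forall>b\<in>S2. ul_lt A (r2 a a) (uone A) \<and> ul_le A (uone A) (uimp A (r2 a b) (r2 b a))"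
    unfolding A_structure_def by auto
  have M3: "(D1 \<union> D2, r3) \<in> K1 A"
    unfolding K1_def A_structure_def
  proof (simp only: fst_conv snd_conv mem_Collect_eq, intro conjI ballI)
    show "D1 \<union> D2 \<noteq> {}" using n1 unfolding D1_def by auto
    show "finite (D1 \<union> D2)" using fin1 fin2 unfolding D1_def D2_def by auto
  next
    fix a b assume a: "a \<in> D1 \<union> D2" and b: "b \<in> D1 \<union> D2"
    show "r3 a b \<in> ucarrier A" using a b c1 c2 bot D1iff D2iff unfolding r3_def by auto
  next
    fix a assume a: "a \<in> D1 \<union> D2"
    show "ul_lt A (r3 a a) (uone A)" using a p1 p2 D1iff D2iff unfolding r3_def by auto
  next
    fix a b assume a: "a \<in> D1 \<union> D2" and b: "b \<in> D1 \<union> D2"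
    show "ul_le A (uone A) (uimp A (r3 a b) (r3 b a))"
    proof (cases "(a \<in> D1 \<and> b \<in> D1) \<or> (a \<in> D2 \<and> b \<in> D2)")
      case True then show ?thesis using p1 p2 D1iff D2iff unfolding r3_def by auto
    next
      case False
      then have "r3 a b = ubot A" "r3 b a = ubot A" unfolding r3_def by auto
      then show ?thesis using one_imp[OF UA bot] by simp
    qed
  qed
  have e1: "embedding f1 (S1, r1) (D1 \<union> D2, r3)"
    unfolding embedding_def using d1 unfolding D1_def r3_def
    by (auto simp: inj_on_def f1_def)
  have e2: "embedding f2 (S2, r2) (D1 \<union> D2, r3)"
    unfolding embedding_def
  proof (simp, intro conjI ballI)
    show "f2 ` S2 \<subseteq> D1 \<union> D2" unfolding D2_def by auto
    show "inj_on f2 S2" using d2 by (metis inj_on_def)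
  next
    fix a b assume a: "a \<in> S2" and b: "b \<in> S2"
    show "r3 (f2 a) (f2 b) = r2 a b"
    proof (cases "f2 a \<in> D1 \<and> f2 b \<in> D1")
      case True
      then have "a \<in> Z" "b \<in> Z" using f2D1 a b by auto
      then show ?thesis using True Zr d2 unfolding r3_def by auto
    next
      case False
      then show ?thesis using a b d2 unfolding r3_def D2_def by auto
    qed
  qed
  have "\<forall>x\<in>Z. f1 x = f2 x" unfolding f1_def f2_def by auto
  with M3 e1 e2 show ?thesis by blast
qed

theorem proposition2:
  fixes A :: "'a ul_alg"
  assumes "UL_chain A" and "countable (ucarrier A)"
  shows "fraisse_class (K1 A)"
proof -
  have UA: "UL_algebra A" using assms(1) unfolding UL_chain_def by simp
  have bot: "ubot A \<in> ucarrier A" using UA unfolding UL_algebra_def Let_def by blast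
  define rs where "rs = (\<lambda>M :: (nat, 'a) astr. (fst M, \<lambda>x y. if x \<in> fst M \<and> y \<in> fst M then snd M x y else ubot A))"
  define R where "R = rs ` K1 A"
  have RK: "R \<subseteq> K1 A" unfolding R_def rs_def K1_def A_structure_def using bot by auto
  have iso: "isomorphic M (rs M)" for M
    unfolding isomorphic_def embedding_def rs_def by (rule exI[of _ id]) auto
  define phi where "phi = (\<lambda>M :: (nat, 'a) astr. (fst M, {((x,y), snd M x y) | x y. x \<in> fst M \<and> y \<in> fst M}))"
  have phiR: "phi ` R \<subseteq> {S. finite S} \<times> {G. finite G \<and> G \<subseteq> UNIV \<times> ucarrier A}"
  proof
    fix p assume "p \<in> phi ` R"
    then obtain M where M: "M \<in> K1 A" and p: "p = phi (rs M)" unfolding R_def by auto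
    have fin: "finite (fst M)" and c: "\<forall>a\<in>fst M. \<forall>b\<in>fst M. snd M a b \<in> ucarrier A"
      using M unfolding K1_def A_structure_def by auto
    have fr: "fst (rs M) = fst M" unfolding rs_def by simp
    have "{((x,y), snd (rs M) x y) | x y. x \<in> fst (rs M) \<and> y \<in> fst (rs M)}
        \<subseteq> (\<lambda>(x,y). ((x,y), snd (rs M) x y)) ` (fst M \<times> fst M)" unfolding fr by auto
    then have "finite {((x,y), snd (rs M) x y) | x y. x \<in> fst (rs M) \<and> y \<in> fst (rs M)}"
      using fin by (meson finite_SigmaI finite_imageI finite_subset)
    then show "p \<in> {S. finite S} \<times> {G. finite G \<and> G \<subseteq> UNIV \<times> ucarrier A}"
      using p fin c unfolding phi_def rs_def by auto
  qed
  have cnt: "countable ({S::nat set. finite S} \<times> {G. finite G \<and> G \<subseteq> (UNIV::(nat\<times>nat) set) \<times> ucarrier A})"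
  proof (rule countable_SIGMA)
    show "countable {S::nat set. finite S}" by (rule countable_Collect_finite)
    show "countable {G. finite G \<and> G \<subseteq> (UNIV::(nat\<times>nat) set) \<times> ucarrier A}"
      by (rule countable_Collect_finite_subset) (use assms(2) in auto)
  qed
  have inj: "inj_on phi R"
  proof (rule inj_onI)
    fix M N assume M: "M \<in> R" and N: "N \<in> R" and eq: "phi M = phi N"
    obtain M' where M': "M = rs M'" using M unfolding R_def by auto
    obtain N' where N': "N = rs N'" using N unfolding R_def by auto
    have f: "fst M = fst N" using eq unfolding phi_def by simp
    have g: "{((x,y), snd M x y) | x y. x \<in> fst M \<and> y \<in> fst M} = {((x,y), snd N x y) | x y. x \<in> fst N \<and> y \<in> fst N}"
    proof -
      have "snd (phi M) = snd (phi N)" using eq by simp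
      then show ?thesis unfolding phi_def snd_conv .
    qed
    have "snd M x y = snd N x y" for x y
    proof (cases "x \<in> fst M \<and> y \<in> fst M")
      case True
      then have "((x,y), snd M x y) \<in> {((x,y), snd N x y) | x y. x \<in> fst N \<and> y \<in> fst N}"
        using g by blast
      then show ?thesis by auto
    next
      case False
      then show ?thesis using f M' N' unfolding rs_def by auto
    qed
    then show "M = N" using f by (simp add: prod_eq_iff ext)
  qed
  have cR: "countable R"
    using countable_image_inj_on[OF countable_subset[OF phiR cnt] inj] .
  have part1: "\<exists>R. countable R \<and> R \<subseteq> K1 A \<and> (\<forall>M\<in>K1 A. \<exists>N\<in>R. isomorphic M N)"
    using cR RK iso unfolding R_def by blast
  have fin: "\<forall>M\<in>K1 A. finite (fst M)" unfolding K1_def by auto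
  have her: "hereditary (K1 A)" unfolding hereditary_def
  proof (intro ballI allI impI)
    fix M N assume M: "M \<in> K1 A" and N: "substructure N M \<and> fst N \<noteq> {}"
    have "N \<in> K1 A" using M N unfolding K1_def A_structure_def substructure_def
      by (auto intro: finite_subset) (metis subsetD)+
    moreover have "isomorphic N N" unfolding isomorphic_def embedding_def
      by (rule exI[of _ id]) auto
    ultimately show "\<exists>N'\<in>K1 A. isomorphic N N'" by blast
  qed
  have jep: "joint_embedding (K1 A)" unfolding joint_embedding_def
  proof (intro ballI)
    fix M1 M2 assume "M1 \<in> K1 A" "M2 \<in> K1 A"
    then show "\<exists>M3\<in>K1 A. \<exists>f g. embedding f M1 M3 \<and> embedding g M2 M3"
      using amalg_gen[OF UA, of "fst M1" "snd M1" "fst M2" "snd M2" "{}"] by auto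
  qed
  have ap: "amalgamation (K1 A)" unfolding amalgamation_def
  proof (intro ballI impI)
    fix M0 M1 M2 assume "M0 \<in> K1 A" "M1 \<in> K1 A" "M2 \<in> K1 A"
      and s: "substructure M0 M1 \<and> substructure M0 M2"
    then show "\<exists>M3\<in>K1 A. \<exists>f1 f2. embedding f1 M1 M3 \<and> embedding f2 M2 M3 \<and> (\<forall>x\<in>fst M0. f1 x = f2 x)"
      using amalg_gen[OF UA, of "fst M1" "snd M1" "fst M2" "snd M2" "fst M0"]
      unfolding substructure_def by auto
  qed
  show ?thesis unfolding fraisse_class_def using part1 fin her jep ap by blast
qed

end
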